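(* For positive integers $a<b\le c$, $$S(bac;t,x)=\frac{t^3x^{a+b+c}\bigl(1+tx^c(1+x+\cdots+x^{b-a-1})\bigr)}{(1-x-tx)\,\psi_{a,b,c}(t,x)+t^3x^{a+b+c}\bigl(1+tx^c(1+x+\cdots+x^{b-a-1})\bigr)},$$ where $$\psi_{a,b,c}(t,x)=(1-x)^2+tx^c(1-x)+t^2x^{a+c}+t^3x^{a+2c}(1+x+\cdots+x^{b-a-1}).$$
   Context: $\mathbb{P}^*$ is the set of finite words over the positive integers (usual order); $bac$ denotes the three-letter word with letters $b,a,c$. For $w=w_1\ldots w_n$, $\mathrm{wt}(w)=t^nx^{\sum_i w_i}$. An embedding of $u$ into $w$ is a string of $|u|$ consecutive letters of $w$ whose $i$-th letter is $\ge$ the $i$-th letter of $u$ for every $i$. $\mathcal{S}(u)$ is the set of words $w$ admitting an embedding of $u$ such that the last $|u|$ letters of $w$ form the only embedding of $u$ into $w$, and $S(u;t,x)=\sum_{w\in\mathcal{S}(u)}\mathrm{wt}(w)$. *)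

theory Defs
  imports "HOL-Analysis.Analysis"
begin

definition pwords :: "nat list set" where
  "pwords = {w. \<forall>i\<in>set w. 1 \<le> i}"

definition embeds_at :: "nat list \<Rightarrow> nat list \<Rightarrow> nat \<Rightarrow> bool" where
  "embeds_at u w i \<longleftrightarrow> i + length u \<le> length w \<and> (\<forall>j<length u. u ! j \<le> w ! (i + j))"

definition Sset :: "nat list \<Rightarrow> nat list set" where
  "Sset u = {w \<in> pwords. length u \<le> length w \<and>
      embeds_at u w (length w - length u) \<and>
      (\<forall>i. embeds_at u w i \<longrightarrow> i = length w - length u)}"

definition wt :: "real \<Rightarrow> real \<Rightarrow> nat list \<Rightarrow> real" where
  "wt t x w = t ^ length w * x ^ sum_list w"

end

theory Submission
  imports Defs
begin

lemma wt_Cons: "wt t x (y#v) = t * x^y * wt t x v" by (simp add: wt_def algebra_simps power_add)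
lemma wt_Nil[simp]: "wt t x [] = 1" by (simp add: wt_def)

lemma pwords_Cons[simp]: "(y#v \<in> pwords) \<longleftrightarrow> 1 \<le> y \<and> v \<in> pwords"
  by (auto simp: pwords_def)
lemma pwords_Nil[simp]: "[] \<in> pwords" by (simp add: pwords_def)

definition PL :: "nat \<Rightarrow> nat list set" where "PL n = {w\<in>pwords. length w = n}"

lemma PL_Suc: "PL (Suc n) = (\<lambda>(y,v). y#v) ` (SIGMA y:{1..}. PL n)"
proof (rule set_eqI)
  fix w show "w \<in> PL (Suc n) \<longleftrightarrow> w \<in> (\<lambda>(y,v). y#v) ` (SIGMA y:{1..}. PL n)"
    by (cases w) (auto simp: PL_def image_iff)
qed

lemma absPL:
  fixes t x :: real
  assumes "\<bar>x\<bar> < 1"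
  shows "((\<lambda>w. \<bar>wt t x w\<bar>) has_sum ((\<bar>t\<bar>*\<bar>x\<bar>/(1-\<bar>x\<bar>))^n)) (PL n)"
proof (induction n)
  case 0
  have "PL 0 = {[]}" by (auto simp: PL_def)
  then show ?case by (simp add: has_sum_finiteI)
next
  case (Suc n)
  define r where "r = \<bar>t\<bar>*\<bar>x\<bar>/(1-\<bar>x\<bar>)"
  have inj: "inj_on (\<lambda>(y,v). (y::nat)#v) (SIGMA y:{1..}. PL n)"
    by (auto simp: inj_on_def)
  have geo: "((\<lambda>y. \<bar>x\<bar>^y) has_sum (\<bar>x\<bar>/(1-\<bar>x\<bar>))) {1..}"
    using has_sum_geometric_from_1[of "\<bar>x\<bar>"] assms by simp
  have inner: "((\<lambda>v. \<bar>wt t x (y#v)\<bar>) has_sum (\<bar>t\<bar>*\<bar>x\<bar>^y * r^n)) (PL n)" for y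
    using has_sum_cmult_right[OF Suc[folded r_def], of "\<bar>t\<bar>*\<bar>x\<bar>^y"]
    by (simp add: wt_Cons abs_mult power_abs)
  have outer: "((\<lambda>y. \<bar>t\<bar>*\<bar>x\<bar>^y * r^n) has_sum r^Suc n) {1..}"
  proof -
    have "((\<lambda>y. \<bar>x\<bar>^y * (\<bar>t\<bar> * r^n)) has_sum (\<bar>x\<bar>/(1-\<bar>x\<bar>)) * (\<bar>t\<bar> * r^n)) {1..}"
      by (rule has_sum_cmult_left[OF geo])
    moreover have "(\<bar>x\<bar>/(1-\<bar>x\<bar>)) * (\<bar>t\<bar> * r^n) = r^Suc n" by (simp add: r_def)
    ultimately show ?thesis by (simp add: mult_ac)
  qed
  have summ: "(\<lambda>(y,v). \<bar>wt t x (y#v)\<bar>) summable_on (SIGMA y:{1..}. PL n)"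
    by (rule summable_on_SigmaI[OF _ has_sum_imp_summable[OF outer]]) (use inner in auto)
  have "((\<lambda>(y,v). \<bar>wt t x (y#v)\<bar>) has_sum r^Suc n) (SIGMA y:{1..}. PL n)"
    by (rule has_sum_SigmaI[OF _ outer summ]) (use inner in auto)
  then have "(((\<lambda>w. \<bar>wt t x w\<bar>) \<circ> (\<lambda>(y,v). y#v)) has_sum r^Suc n) (SIGMA y:{1..}. PL n)"
    by (simp add: o_def case_prod_unfold)
  then show ?case unfolding PL_Suc r_def[symmetric] using has_sum_reindex[OF inj] by blast
qed

lemma geo_UNIV:
  fixes r :: real
  assumes "\<bar>r\<bar> < 1"
  shows "((\<lambda>n. r^n) has_sum (1/(1-r))) UNIV"
proof -
  have s1: "(\<lambda>n. r^n) sums (1/(1-r))" by (rule geometric_sums) (use assms in simp)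
  have "summable (\<lambda>n. \<bar>r\<bar>^n)" by (rule summable_geometric) (use assms in simp)
  then have s2: "summable (\<lambda>n. norm (r^n))" by (simp add: power_abs)
  show ?thesis by (rule norm_summable_imp_has_sum[OF s2 s1])
qed

lemma abs_summable_pwords:
  fixes t x :: real
  assumes "\<bar>x\<bar> * (1 + \<bar>t\<bar>) < 1"
  shows "(\<lambda>w. \<bar>wt t x w\<bar>) summable_on pwords"
proof -
  have "0 \<le> \<bar>t\<bar> * \<bar>x\<bar>" by simp
  moreover have h: "\<bar>x\<bar> + \<bar>t\<bar>*\<bar>x\<bar> < 1" using assms by (simp add: algebra_simps)
  ultimately have x1: "\<bar>x\<bar> < 1" by linarith
  define r where "r = \<bar>t\<bar>*\<bar>x\<bar>/(1-\<bar>x\<bar>)"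
  have r0: "0 \<le> r" using x1 by (simp add: r_def)
  have r1: "r < 1" using x1 h by (simp add: r_def divide_less_eq)
  have "pwords = (\<Union>n\<in>UNIV. PL n)" by (auto simp: PL_def)
  moreover have "(\<lambda>w. \<bar>wt t x w\<bar>) summable_on (\<Union>n\<in>UNIV. PL n)"
  proof (rule summable_on_UnionI)
    show "((\<lambda>w. \<bar>wt t x w\<bar>) has_sum r^n) (PL n)" for n using absPL[OF x1] by (simp add: r_def)
    have "((\<lambda>n. r^n) has_sum (1/(1-r))) UNIV"
      using geo_UNIV[of r] r0 r1 by simp
    then show "(\<lambda>n. r^n) summable_on UNIV" by (rule has_sum_imp_summable)
    show "disjoint_family_on PL UNIV" by (auto simp: disjoint_family_on_def PL_def)
  qed auto
  ultimately show ?thesis by simp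
qed


fun go :: "nat \<Rightarrow> nat \<Rightarrow> nat \<Rightarrow> bool \<times> bool \<Rightarrow> nat list \<Rightarrow> bool" where
  "go a b c s [] = False"
| "go a b c s (y#v) = (if snd s \<and> c \<le> y then v = [] else go a b c (b \<le> y, fst s \<and> a \<le> y) v)"

definition HE :: "nat \<Rightarrow> nat \<Rightarrow> nat \<Rightarrow> nat list \<Rightarrow> bool" where
  "HE a b c z \<longleftrightarrow> (\<exists>r y1 y2 y3. z = r @ [y1,y2,y3] \<and> b \<le> y1 \<and> a \<le> y2 \<and> c \<le> y3)"
definition Q1 :: "nat \<Rightarrow> nat list \<Rightarrow> bool" where
  "Q1 b z \<longleftrightarrow> (\<exists>r y. z = r @ [y] \<and> b \<le> y)"
definition Q2 :: "nat \<Rightarrow> nat \<Rightarrow> nat list \<Rightarrow> bool" where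
  "Q2 a b z \<longleftrightarrow> (\<exists>r y1 y2. z = r @ [y1,y2] \<and> b \<le> y1 \<and> a \<le> y2)"

lemma Q1_snoc: "Q1 b (p@[y]) \<longleftrightarrow> b \<le> y"
  by (auto simp: Q1_def)
lemma Q2_snoc: "Q2 a b (p@[y]) \<longleftrightarrow> Q1 b p \<and> a \<le> y"
proof -
  have "p@[y] = r@[y1,y2] \<longleftrightarrow> p = r@[y1] \<and> y = y2" for r y1 y2
    using append1_eq_conv[of p y "r@[y1]" y2] by simp
  then show ?thesis by (auto simp: Q1_def Q2_def)
qed
lemma HE_snoc: "HE a b c (p@[y]) \<longleftrightarrow> Q2 a b p \<and> c \<le> y"
proof -
  have "p@[y] = r@[y1,y2,y3] \<longleftrightarrow> p = r@[y1,y2] \<and> y = y3" for r y1 y2 y3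
    using append1_eq_conv[of p y "r@[y1,y2]" y3] by simp
  then show ?thesis by (auto simp: HE_def Q2_def)
qed
lemma Q1_Nil[simp]: "\<not> Q1 b []" by (auto simp: Q1_def)
lemma Q2_Nil[simp]: "\<not> Q2 a b []" by (auto simp: Q2_def)
lemma HE_len: "HE a b c z \<Longrightarrow> 3 \<le> length z" by (auto simp: HE_def)

lemma go_char:
  "go a b c (Q1 b p, Q2 a b p) w \<longleftrightarrow>
    (w \<noteq> [] \<and> HE a b c (p@w) \<and> (\<forall>k. length p < k \<and> k < length (p@w) \<longrightarrow> \<not> HE a b c (take k (p@w))))"
proof (induction w arbitrary: p)
  case Nil
  then show ?case by simp
next
  case (Cons y v)
  have eq: "p @ y # v = (p@[y]) @ v" by simp
  show ?case
  proof (cases "Q2 a b p \<and> c \<le> y")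
    case True
    then have he: "HE a b c (p@[y])" by (simp add: HE_snoc)
    show ?thesis
    proof (cases v)
      case Nil
      then show ?thesis using True he by auto
    next
      case (Cons z zs)
      have "take (Suc (length p)) (p @ y # v) = p@[y]" by simp
      moreover have "length p < Suc (length p) \<and> Suc (length p) < length (p @ y # v)"
        using Cons by simp
      ultimately have "\<not>(\<forall>k. length p < k \<and> k < length (p@y#v) \<longrightarrow> \<not> HE a b c (take k (p@y#v)))"
        using he by (intro notI) (drule spec[of _ "Suc (length p)"], simp)
      moreover have "go a b c (Q1 b p, Q2 a b p) (y#v) = False" using True Cons by simp
      ultimately show ?thesis by blast
    qed
  next
    case False
    then have nhe: "\<not> HE a b c (p@[y])" by (simp add: HE_snoc)
    have st: "(b \<le> y, Q1 b p \<and> a \<le> y) = (Q1 b (p@[y]), Q2 a b (p@[y]))"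
      by (simp add: Q1_snoc Q2_snoc)
    have "go a b c (Q1 b p, Q2 a b p) (y#v) = go a b c (Q1 b (p@[y]), Q2 a b (p@[y])) v"
      using False by (auto simp: Q1_snoc Q2_snoc)
    also have "\<dots> = (v \<noteq> [] \<and> HE a b c ((p@[y])@v) \<and>
       (\<forall>k. length (p@[y]) < k \<and> k < length ((p@[y])@v) \<longrightarrow> \<not> HE a b c (take k ((p@[y])@v))))"
      by (rule Cons.IH)
    also have "\<dots> = (y#v \<noteq> [] \<and> HE a b c (p@y#v) \<and>
       (\<forall>k. length p < k \<and> k < length (p@y#v) \<longrightarrow> \<not> HE a b c (take k (p@y#v))))"
    proof (cases v)
      case Nil
      then show ?thesis using nhe by simp
    next
      case (Cons z zs)
      have "take (Suc (length p)) (p @ y # v) = p@[y]" by simp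
      then have "(\<forall>k. length p < k \<and> k < length (p@y#v) \<longrightarrow> \<not> HE a b c (take k (p@y#v))) \<longleftrightarrow>
            (\<forall>k. Suc (length p) < k \<and> k < length (p@y#v) \<longrightarrow> \<not> HE a b c (take k (p@y#v)))"
      proof (intro iffI allI impI)
        fix k assume A: "\<forall>k. length p < k \<and> k < length (p@y#v) \<longrightarrow> \<not> HE a b c (take k (p@y#v))"
          and k: "Suc (length p) < k \<and> k < length (p@y#v)"
        then have "length p < k" by simp
        then show "\<not> HE a b c (take k (p@y#v))" using A k by simp
      next
        fix k assume B: "\<forall>k. Suc (length p) < k \<and> k < length (p@y#v) \<longrightarrow> \<not> HE a b c (take k (p@y#v))"
          and k: "length p < k \<and> k < length (p@y#v)"
        show "\<not> HE a b c (take k (p@y#v))"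
        proof (cases "k = Suc (length p)")
          case True
          then show ?thesis using nhe \<open>take (Suc (length p)) (p @ y # v) = p@[y]\<close> by simp
        next
          case False
          then have "Suc (length p) < k" using k by simp
          then show ?thesis using B k by simp
        qed
      qed
      then show ?thesis using Cons by simp
    qed
    finally show ?thesis .
  qed
qed

lemma lt3: "(j::nat) < 3 \<Longrightarrow> j = 0 \<or> j = 1 \<or> j = 2" by arith

lemma embeds_iff3: "embeds_at [b,a,c] w i \<longleftrightarrow> i + 3 \<le> length w \<and> b \<le> w!i \<and> a \<le> w!(i+1) \<and> c \<le> w!(i+2)"
proof
  assume e: "embeds_at [b,a,c] w i"
  have all: "\<And>j. j < length [b,a,c] \<Longrightarrow> [b,a,c]!j \<le> w!(i+j)" using e by (simp add: embeds_at_def)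
  have "b \<le> w!i" using all[of 0] by simp
  moreover have "a \<le> w!(i+1)" using all[of 1] by simp
  moreover have "c \<le> w!(i+2)" using all[of 2] by (simp add: numeral_2_eq_2)
  moreover have "i + 3 \<le> length w" using e by (simp add: embeds_at_def)
  ultimately show "i + 3 \<le> length w \<and> b \<le> w!i \<and> a \<le> w!(i+1) \<and> c \<le> w!(i+2)" by simp
next
  assume h: "i + 3 \<le> length w \<and> b \<le> w!i \<and> a \<le> w!(i+1) \<and> c \<le> w!(i+2)"
  have "[b,a,c]!j \<le> w!(i+j)" if "j < 3" for j
    using lt3[OF that] h by (auto simp: numeral_2_eq_2)
  then show "embeds_at [b,a,c] w i" using h unfolding embeds_at_def by simp
qed

lemma embeds_HE:
  "embeds_at [b,a,c] w i \<longleftrightarrow> i + 3 \<le> length w \<and> HE a b c (take (i+3) w)"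
proof
  assume e: "embeds_at [b,a,c] w i"
  then have len: "i + 3 \<le> length w" and le: "b \<le> w!i" "a \<le> w!(i+1)" "c \<le> w!(i+2)"
    by (simp_all add: embeds_iff3)
  have "take (Suc (Suc (Suc i))) w = take i w @ [w!i, w!(i+1), w!(i+2)]"
    using len by (simp add: take_Suc_conv_app_nth)
  then have "take (i+3) w = take i w @ [w!i, w!(i+1), w!(i+2)]"
    by (simp add: numeral_3_eq_3)
  then show "i + 3 \<le> length w \<and> HE a b c (take (i+3) w)"
    using len le unfolding HE_def by blast
next
  assume h: "i + 3 \<le> length w \<and> HE a b c (take (i+3) w)"
  then obtain r y1 y2 y3 where r: "take (i+3) w = r @ [y1,y2,y3]" "b \<le> y1" "a \<le> y2" "c \<le> y3"
    unfolding HE_def by blast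
  have lr: "length r = i" using arg_cong[OF r(1), of length] h by simp
  have t: "w!(i+j) = [y1,y2,y3]!j" if "j < 3" for j
  proof -
    have "w!(i+j) = take (i+3) w ! (i+j)" using that by simp
    also have "\<dots> = (r@[y1,y2,y3])!(length r + j)" using r(1) lr by simp
    also have "\<dots> = [y1,y2,y3]!j" by (rule nth_append_length_plus)
    finally show ?thesis .
  qed
  have "w!i = y1" using t[of 0] by simp
  moreover have "w!(i+1) = y2" using t[of 1] by simp
  moreover have "w!(i+2) = y3" using t[of 2] by (simp add: numeral_2_eq_2)
  ultimately show "embeds_at [b,a,c] w i" using h r by (simp add: embeds_iff3)
qed

lemma Sset_go: "Sset [b,a,c] = {w \<in> pwords. go a b c (False,False) w}"
proof -
  have gg: "go a b c (False,False) w \<longleftrightarrow>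
    (w \<noteq> [] \<and> HE a b c w \<and> (\<forall>k. 0 < k \<and> k < length w \<longrightarrow> \<not> HE a b c (take k w)))" for w
    using go_char[of a b c "[]" w] by simp
  show ?thesis
  proof (rule set_eqI, rule iffI)
    fix w assume ws: "w \<in> Sset [b,a,c]"
    have w1: "w \<in> pwords" using ws by (simp add: Sset_def numeral_3_eq_3)
    have w2: "3 \<le> length w" using ws by (simp add: Sset_def numeral_3_eq_3)
    have w3: "embeds_at [b,a,c] w (length w - 3)" using ws by (simp add: Sset_def numeral_3_eq_3)
    have w4: "\<And>i. embeds_at [b,a,c] w i \<Longrightarrow> i = length w - 3" using ws by (simp add: Sset_def numeral_3_eq_3)
    have he: "HE a b c w" using w2 w3 embeds_HE[of b a c w "length w - 3"] by simp
    have nk: "\<not> HE a b c (take k w)" if "0 < k" "k < length w" for k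
    proof
      assume hk: "HE a b c (take k w)"
      then have k3: "3 \<le> k" using HE_len[OF hk] that by simp
      then have "k - 3 + 3 = k" by simp
      then have "embeds_at [b,a,c] w (k-3)" using embeds_HE[of b a c w "k-3"] hk that by simp
      then have "k - 3 = length w - 3" by (rule w4)
      then show False using k3 that by simp
    qed
    have "w \<noteq> []" using w2 by auto
    then have "go a b c (False,False) w" using gg he nk by blast
    then show "w \<in> {w \<in> pwords. go a b c (False,False) w}" using w1 by simp
  next
    fix w assume ws: "w \<in> {w \<in> pwords. go a b c (False,False) w}"
    then have w1: "w \<in> pwords" and g: "go a b c (False,False) w" by simp_all
    have w2: "HE a b c w" using g gg by blast
    have w3: "\<And>k. 0 < k \<Longrightarrow> k < length w \<Longrightarrow> \<not> HE a b c (take k w)"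
      using g gg by blast
    have l3: "3 \<le> length w" using HE_len[OF w2] .
    have e: "embeds_at [b,a,c] w (length w - 3)" using embeds_HE[of b a c w "length w - 3"] l3 w2 by simp
    have ii: "i = length w - 3" if ei: "embeds_at [b,a,c] w i" for i
    proof -
      have i1: "i + 3 \<le> length w" and i2: "HE a b c (take (i+3) w)"
        using embeds_HE[of b a c w i] ei by simp_all
      show ?thesis
      proof (cases "i + 3 < length w")
        case True
        then show ?thesis using w3[of "i+3"] i2 by simp
      next
        case False
        then show ?thesis using i1 by simp
      qed
    qed
    have L3: "length [b,a,c] = 3" by simp
    show "w \<in> Sset [b,a,c]" unfolding Sset_def L3 using w1 l3 e ii by blast
  qed
qed

definition LS :: "nat \<Rightarrow> nat \<Rightarrow> nat \<Rightarrow> bool \<times> bool \<Rightarrow> nat list set" where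
  "LS a b c s = {w \<in> pwords. go a b c s w}"

lemma Cons_image: "(y#v \<in> (\<lambda>(y,v). y#v) ` S) \<longleftrightarrow> (y,v) \<in> S"
proof
  assume "y#v \<in> (\<lambda>(y,v). y#v) ` S"
  then obtain q where q: "q \<in> S" "y#v = (\<lambda>(y,v). y#v) q" by blast
  obtain y' v' where "q = (y',v')" by (cases q)
  with q show "(y,v) \<in> S" by simp
next
  assume "(y,v) \<in> S"
  then show "y#v \<in> (\<lambda>(y,v). y#v) ` S" by (rule rev_image_eqI) simp
qed

lemma Nil_image: "[] \<notin> (\<lambda>(y,v). y#v) ` S"
  by auto

lemma LS_Cons:
  "LS a b c s = (\<lambda>(y,v). y#v) ` (SIGMA y:{1..}. (if snd s \<and> c \<le> y then {[]} else LS a b c (b \<le> y, fst s \<and> a \<le> y)))"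
proof (rule set_eqI)
  fix w
  show "w \<in> LS a b c s \<longleftrightarrow> w \<in> (\<lambda>(y,v). y#v) ` (SIGMA y:{1..}. (if snd s \<and> c \<le> y then {[]} else LS a b c (b \<le> y, fst s \<and> a \<le> y)))"
  proof (cases w)
    case Nil
    then show ?thesis using Nil_image by (simp add: LS_def)
  next
    case (Cons y v)
    show ?thesis unfolding Cons Cons_image
      by (cases "snd s \<and> c \<le> y") (auto simp: LS_def)
  qed
qed

lemma wt_summable_pwords:
  fixes t x :: real
  assumes "\<bar>x\<bar> * (1 + \<bar>t\<bar>) < 1"
  shows "wt t x summable_on pwords"
proof (rule abs_summable_summable)
  show "(\<lambda>w. norm (wt t x w)) summable_on pwords"
    using abs_summable_pwords[OF assms] by (simp add: real_norm_def)
qed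

lemma LS_rec:
  fixes t x :: real
  assumes "\<bar>x\<bar> * (1 + \<bar>t\<bar>) < 1"
  shows "((\<lambda>y. t*x^y * (if snd s \<and> c \<le> y then 1 else infsum (wt t x) (LS a b c (b \<le> y, fst s \<and> a \<le> y))))
           has_sum infsum (wt t x) (LS a b c s)) {1..}"
proof -
  have summ: "wt t x summable_on LS a b c s'" for s'
    by (rule summable_on_subset_banach[OF wt_summable_pwords[OF assms]]) (auto simp: LS_def)
  define B where "B y = (if snd s \<and> c \<le> y then {[]} else LS a b c (b \<le> y, fst s \<and> a \<le> y))" for y
  have inj: "inj_on (\<lambda>(y,v). (y::nat)#v) (SIGMA y:{1..}. B y)"
    by (auto simp: inj_on_def)
  have "(wt t x has_sum infsum (wt t x) (LS a b c s)) (LS a b c s)"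
    using summ by (simp add: summable_iff_has_sum_infsum[symmetric])
  then have "(wt t x has_sum infsum (wt t x) (LS a b c s)) ((\<lambda>(y,v). y#v) ` (SIGMA y:{1..}. B y))"
    using LS_Cons[of a b c s] by (simp add: B_def)
  then have S: "((wt t x \<circ> (\<lambda>(y,v). y#v)) has_sum infsum (wt t x) (LS a b c s)) (SIGMA y:{1..}. B y)"
    using has_sum_reindex[OF inj] by blast
  show ?thesis
  proof (rule has_sum_SigmaD[OF S])
    fix y :: nat assume "y \<in> {1..}"
    show "((\<lambda>v. (wt t x \<circ> (\<lambda>(y,v). y#v)) (y, v)) has_sum
        t*x^y * (if snd s \<and> c \<le> y then 1 else infsum (wt t x) (LS a b c (b \<le> y, fst s \<and> a \<le> y)))) (B y)"
    proof (cases "snd s \<and> c \<le> y")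
      case True
      then show ?thesis by (simp add: B_def wt_Cons has_sum_finiteI)
    next
      case False
      have "(wt t x has_sum infsum (wt t x) (LS a b c (b \<le> y, fst s \<and> a \<le> y))) (LS a b c (b \<le> y, fst s \<and> a \<le> y))"
        using summ by (simp add: summable_iff_has_sum_infsum[symmetric])
      from has_sum_cmult_right[OF this, of "t*x^y"]
      have H: "((\<lambda>v. t*x^y * wt t x v) has_sum t*x^y * infsum (wt t x) (LS a b c (b \<le> y, fst s \<and> a \<le> y)))
          (LS a b c (b \<le> y, fst s \<and> a \<le> y))" .
      have eqB: "B y = LS a b c (b \<le> y, fst s \<and> a \<le> y)" unfolding B_def by (rule if_not_P[OF False])
      show ?thesis unfolding eqB if_not_P[OF False] using H by (simp add: wt_Cons o_def)
    qed
  qed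
qed

lemma geo_from:
  fixes x :: real
  assumes "\<bar>x\<bar> < 1"
  shows "((\<lambda>y. x^y) has_sum (x^c/(1-x))) {c..}"
proof -
  have "((\<lambda>n. x^n) has_sum (1/(1-x))) UNIV"
    using geo_UNIV[OF assms] .
  from has_sum_cmult_right[OF this, of "x^c"]
  have h: "((\<lambda>n. x^c * x^n) has_sum (x^c/(1-x))) UNIV" by simp
  have inj: "inj_on (\<lambda>n. n + c) UNIV" by (auto simp: inj_on_def)
  have im: "(\<lambda>n. n + c) ` UNIV = {c..}"
    by (auto simp: image_iff) (rule_tac x="x - c" in exI; simp)
  have "(((\<lambda>y. x^y) \<circ> (\<lambda>n. n + c)) has_sum (x^c/(1-x))) UNIV"
    using h by (simp add: o_def power_add mult.commute)
  then show ?thesis using has_sum_reindex[OF inj] im by metis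
qed

lemma piece:
  fixes t x v1 v2 v3 v4 :: real and a b c :: nat and \<phi> :: "nat \<Rightarrow> real"
  assumes x: "\<bar>x\<bar> < 1" and abc: "1 \<le> a" "a < b" "b \<le> c"
    and phi: "\<And>y. 1 \<le> y \<Longrightarrow> \<phi> y = (if y < a then v1 else if y < b then v2 else if y < c then v3 else v4)"
  shows "((\<lambda>y. t*x^y*\<phi> y) has_sum
     (v1 * (t * (\<Sum>y\<in>{1..<a}. x^y)) + v2 * (t * (\<Sum>y\<in>{a..<b}. x^y)) + v3 * (t * (\<Sum>y\<in>{b..<c}. x^y))
      + v4 * (t * x^c/(1-x)))) {1..}"
proof -
  have h1: "((\<lambda>y. t*x^y*\<phi> y) has_sum v1 * (t * (\<Sum>y\<in>{1..<a}. x^y))) {1..<a}"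
    by (rule has_sum_finiteI) (auto simp: phi sum_distrib_left mult_ac intro!: sum.cong)
  have h2: "((\<lambda>y. t*x^y*\<phi> y) has_sum v2 * (t * (\<Sum>y\<in>{a..<b}. x^y))) {a..<b}"
    by (rule has_sum_finiteI) (use abc in \<open>auto simp: phi sum_distrib_left mult_ac intro!: sum.cong\<close>)
  have h3: "((\<lambda>y. t*x^y*\<phi> y) has_sum v3 * (t * (\<Sum>y\<in>{b..<c}. x^y))) {b..<c}"
    by (rule has_sum_finiteI) (use abc in \<open>auto simp: phi sum_distrib_left mult_ac intro!: sum.cong\<close>)
  have g: "((\<lambda>y. x^y * (t * v4)) has_sum (x^c/(1-x)) * (t * v4)) {c..}"
    by (rule has_sum_cmult_left[OF geo_from[OF x]])
  have h4: "((\<lambda>y. t*x^y*\<phi> y) has_sum v4 * (t * x^c/(1-x))) {c..}"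
  proof -
    have "((\<lambda>y. t*x^y*\<phi> y) has_sum (x^c/(1-x)) * (t * v4)) {c..}"
    proof (rule has_sum_cong[THEN iffD1, OF _ g])
      fix y assume "y \<in> {c..}"
      then have "1 \<le> y" "\<not> y < a" "\<not> y < b" "\<not> y < c" using abc by auto
      then show "x^y * (t * v4) = t*x^y*\<phi> y" using phi[of y] by simp
    qed
    then show ?thesis by (simp add: mult_ac)
  qed
  have "((\<lambda>y. t*x^y*\<phi> y) has_sum
     (v1 * (t * (\<Sum>y\<in>{1..<a}. x^y)) + v2 * (t * (\<Sum>y\<in>{a..<b}. x^y)) + v3 * (t * (\<Sum>y\<in>{b..<c}. x^y))
      + v4 * (t * x^c/(1-x)))) ((({1..<a} \<union> {a..<b}) \<union> {b..<c}) \<union> {c..})"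
    by (intro has_sum_Un_disjoint h1 h2 h3 h4) (use abc in auto)
  moreover have "(({1..<a} \<union> {a..<b}) \<union> {b..<c}) \<union> {c..} = {1..}"
    using abc by (auto; linarith)
  ultimately show ?thesis by simp
qed

lemma state_eq:
  fixes t x :: real and a b c :: nat
  assumes conv: "\<bar>x\<bar> * (1 + \<bar>t\<bar>) < 1" and abc: "1 \<le> a" "a < b" "b \<le> c"
  defines "F \<equiv> \<lambda>s. infsum (wt t x) (LS a b c s)"
  shows "F (p1,p2) = F (False,False) * (t * (\<Sum>y\<in>{1..<a}. x^y)) + F (False,p1) * (t * (\<Sum>y\<in>{a..<b}. x^y))
      + F (True,p1) * (t * (\<Sum>y\<in>{b..<c}. x^y)) + (if p2 then 1 else F (True,p1)) * (t * x^c/(1-x))"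
proof -
  have "0 \<le> \<bar>t\<bar> * \<bar>x\<bar>" by simp
  moreover have h: "\<bar>x\<bar> + \<bar>t\<bar>*\<bar>x\<bar> < 1" using conv by (simp add: algebra_simps)
  ultimately have x1: "\<bar>x\<bar> < 1" by linarith
  have R: "((\<lambda>y. t*x^y * (if snd (p1,p2) \<and> c \<le> y then 1 else F (b \<le> y, fst (p1,p2) \<and> a \<le> y)))
           has_sum F (p1,p2)) {1..}"
    using LS_rec[OF conv, of "(p1,p2)" c a b] unfolding F_def by simp
  have P: "((\<lambda>y. t*x^y * (if snd (p1,p2) \<and> c \<le> y then 1 else F (b \<le> y, fst (p1,p2) \<and> a \<le> y)))
           has_sum (F (False,False) * (t * (\<Sum>y\<in>{1..<a}. x^y)) + F (False,p1) * (t * (\<Sum>y\<in>{a..<b}. x^y))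
      + F (True,p1) * (t * (\<Sum>y\<in>{b..<c}. x^y)) + (if p2 then 1 else F (True,p1)) * (t * x^c/(1-x)))) {1..}"
  proof (rule piece[OF x1 abc])
    fix y :: nat assume "1 \<le> y"
    show "(if snd (p1,p2) \<and> c \<le> y then 1 else F (b \<le> y, fst (p1,p2) \<and> a \<le> y)) =
      (if y < a then F (False,False) else if y < b then F (False,p1) else if y < c then F (True,p1)
       else (if p2 then 1 else F (True,p1)))"
      using abc by (cases "y < a"; cases "y < b"; cases "y < c") auto
  qed
  show ?thesis using has_sum_unique[OF R P] .
qed

lemma alg:
  fixes g1 g2 g3 g4 A B C E :: real
  assumes e1: "A = A*g1 + A*g2 + B*g3 + B*g4"
    and e2: "B = A*g1 + C*g2 + E*g3 + E*g4"
    and e3: "C = A*g1 + A*g2 + B*g3 + g4"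
    and e4: "E = A*g1 + C*g2 + E*g3 + g4"
  shows "(1 - (g1+g2) - g3 - g3*(g1+g2)*g4 - g4*(1+g4)*(g1 + (g1+g2)*g2)) * A
           = (g3+g4)*g4*((1+g4)*g2 + g3 + g4)"
proof -
  have f1: "(1+g4)*E = B + g4"
  proof -
    have "B - E = E*g4 - g4" using e2 e4 by linarith
    then show ?thesis by (simp add: algebra_simps)
  qed
  have f2: "C = A - g4*B + g4"
  proof -
    have "A - C = B*g4 - g4" using e1 e3 by linarith
    then show ?thesis by (simp add: algebra_simps)
  qed
  define K where "K = 1 - g3 + (1+g4)*g2*g4"
  have f3: "K*B = (1+g4)*(g1+g2)*A + g4*((1+g4)*g2 + g3 + g4)"
  proof -
    have "(1+g4)*B = (1+g4)*(A*g1 + C*g2) + (g3+g4)*((1+g4)*E)"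
      by (subst e2) (simp add: algebra_simps)
    also have "\<dots> = (1+g4)*(A*g1 + (A - g4*B + g4)*g2) + (g3+g4)*(B + g4)"
      by (simp only: f1 f2)
    finally have "(1+g4)*B = (1+g4)*(A*g1 + (A - g4*B + g4)*g2) + (g3+g4)*(B + g4)" .
    then show ?thesis unfolding K_def by (simp add: algebra_simps)
  qed
  have h1: "(1 - (g1+g2))*A = (g3+g4)*B"
  proof -
    have "A - A*g1 - A*g2 = B*g3 + B*g4" using e1 by linarith
    then show ?thesis by (simp add: algebra_simps)
  qed
  have "K*((1 - (g1+g2))*A) = K*((g3+g4)*B)" by (simp only: h1)
  also have "\<dots> = (g3+g4)*(K*B)" by (simp only: mult.left_commute)
  also have "\<dots> = (g3+g4)*((1+g4)*(g1+g2)*A + g4*((1+g4)*g2 + g3 + g4))" by (simp only: f3)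
  finally have X: "K*((1 - (g1+g2))*A) = (g3+g4)*((1+g4)*(g1+g2)*A + g4*((1+g4)*g2 + g3 + g4))" .
  have Y: "(1 - (g1+g2) - g3 - g3*(g1+g2)*g4 - g4*(1+g4)*(g1 + (g1+g2)*g2)) * A
      = K*((1 - (g1+g2))*A) - (g3+g4)*((1+g4)*(g1+g2)*A)"
    unfolding K_def by (simp add: algebra_simps)
  show ?thesis using X Y by (simp add: algebra_simps)
qed

lemma delta_pos:
  fixes g1 g2 g3 g4 :: real
  assumes S: "\<bar>g1\<bar> + \<bar>g2\<bar> + \<bar>g3\<bar> + \<bar>g4\<bar> < 1"
  shows "0 < 1 - (g1+g2) - g3 - g3*(g1+g2)*g4 - g4*(1+g4)*(g1 + (g1+g2)*g2)"
proof -
  define \<alpha> where "\<alpha> = \<bar>g1\<bar>"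
  define \<beta> where "\<beta> = \<bar>g2\<bar>"
  define \<gamma> where "\<gamma> = \<bar>g3\<bar>"
  define \<delta> where "\<delta> = \<bar>g4\<bar>"
  define p where "p = \<alpha> + \<beta>"
  have nn: "0 \<le> \<alpha>" "0 \<le> \<beta>" "0 \<le> \<gamma>" "0 \<le> \<delta>" "0 \<le> p"
    by (simp_all add: \<alpha>_def \<beta>_def \<gamma>_def \<delta>_def p_def)
  have Sp: "p + \<gamma> + \<delta> < 1" using S by (simp add: \<alpha>_def \<beta>_def \<gamma>_def \<delta>_def p_def)
  have u: "\<bar>g1+g2\<bar> \<le> p" unfolding p_def \<alpha>_def \<beta>_def by (rule abs_triangle_ineq)
  have p1: "p \<le> 1" using Sp nn by linarith
  have a1: "\<alpha> + p*\<beta> \<le> p"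
  proof -
    have "p*\<beta> \<le> 1*\<beta>" by (rule mult_right_mono[OF p1 nn(2)])
    then show ?thesis by (simp add: p_def)
  qed
  have a2: "(1+\<delta>)*(\<alpha>+p*\<beta>) \<le> (1+\<delta>)*p" by (rule mult_left_mono[OF a1]) (use nn in simp)
  have a3: "(\<gamma> + 1 + \<delta>)*p \<le> (2-p)*p" by (rule mult_right_mono) (use Sp nn in simp_all)
  have a4: "(2-p)*p \<le> 1"
  proof -
    have "(2-p)*p = 1 - (1-p)^2" by (simp add: power2_eq_square algebra_simps)
    moreover have "0 \<le> (1-p)^2" by simp
    ultimately show ?thesis by linarith
  qed
  have K: "\<gamma>*p + (1+\<delta>)*(\<alpha>+p*\<beta>) \<le> 1"
    using a2 a3 a4 by (simp add: algebra_simps)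
  have X: "\<bar>g3*(g1+g2)*g4\<bar> \<le> \<delta>*(\<gamma>*p)"
  proof -
    have "\<bar>g3*(g1+g2)*g4\<bar> = \<gamma>*\<bar>g1+g2\<bar>*\<delta>" by (simp add: abs_mult \<gamma>_def \<delta>_def)
    also have "\<dots> \<le> \<gamma>*p*\<delta>" by (intro mult_right_mono mult_left_mono u) (use nn in simp_all)
    finally show ?thesis by (simp add: mult_ac)
  qed
  have Y: "\<bar>g4*(1+g4)*(g1 + (g1+g2)*g2)\<bar> \<le> \<delta>*((1+\<delta>)*(\<alpha>+p*\<beta>))"
  proof -
    have b1: "\<bar>1+g4\<bar> \<le> 1+\<delta>" unfolding \<delta>_def by (metis abs_one abs_triangle_ineq)
    have b2: "\<bar>g1 + (g1+g2)*g2\<bar> \<le> \<alpha>+p*\<beta>"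
    proof -
      have "\<bar>g1 + (g1+g2)*g2\<bar> \<le> \<bar>g1\<bar> + \<bar>g1+g2\<bar>*\<bar>g2\<bar>" by (metis abs_mult abs_triangle_ineq)
      also have "\<dots> \<le> \<alpha> + p*\<beta>" using mult_right_mono[OF u, of "\<bar>g2\<bar>"] by (simp add: \<alpha>_def \<beta>_def)
      finally show ?thesis .
    qed
    have "\<bar>g4*(1+g4)*(g1 + (g1+g2)*g2)\<bar> = \<delta>*(\<bar>1+g4\<bar>*\<bar>g1 + (g1+g2)*g2\<bar>)"
      by (simp add: abs_mult \<delta>_def)
    also have "\<dots> \<le> \<delta>*((1+\<delta>)*(\<alpha>+p*\<beta>))"
      by (intro mult_left_mono mult_mono b1 b2) (use nn in simp_all)
    finally show ?thesis .
  qed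
  have Z: "\<delta>*(\<gamma>*p) + \<delta>*((1+\<delta>)*(\<alpha>+p*\<beta>)) \<le> \<delta>"
  proof -
    have "\<delta>*(\<gamma>*p + (1+\<delta>)*(\<alpha>+p*\<beta>)) \<le> \<delta>*1" by (rule mult_left_mono[OF K nn(4)])
    then show ?thesis by (simp add: algebra_simps)
  qed
  have "g1+g2 \<le> p" using u by linarith
  moreover have "g3 \<le> \<gamma>" by (simp add: \<gamma>_def)
  moreover have "g3*(g1+g2)*g4 \<le> \<delta>*(\<gamma>*p)" using X by linarith
  moreover have "g4*(1+g4)*(g1 + (g1+g2)*g2) \<le> \<delta>*((1+\<delta>)*(\<alpha>+p*\<beta>))" using Y by linarith
  ultimately show ?thesis using Z Sp by linarith
qed

lemma gp_mult:
  fixes z :: real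
  shows "m \<le> n \<Longrightarrow> (1-z) * (\<Sum>y\<in>{m..<n}. z^y) = z^m - z^n"
proof (induction n)
  case 0
  then show ?case by simp
next
  case (Suc n)
  show ?case
  proof (cases "m \<le> n")
    case True
    have "(1-z) * (\<Sum>y\<in>{m..<Suc n}. z^y) = (1-z) * (\<Sum>y\<in>{m..<n}. z^y) + (1-z)*z^n"
      using True by (simp add: sum.atLeastLessThan_Suc algebra_simps)
    also have "\<dots> = z^m - z^n + (1-z)*z^n" using Suc.IH[OF True] by simp
    finally show ?thesis by (simp add: algebra_simps)
  next
    case False
    then have "m = Suc n" using Suc.prems by simp
    then show ?thesis by simp
  qed
qed

lemma gp_closed:
  fixes z :: real
  assumes "m \<le> n" "z \<noteq> 1"
  shows "(\<Sum>y\<in>{m..<n}. z^y) = (z^m - z^n)/(1-z)"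
  using gp_mult[OF assms(1), of z] assms(2) by (simp add: field_simps)

lemma abs_gp:
  fixes z :: real
  assumes "m \<le> n" "\<bar>z\<bar> < 1"
  shows "\<bar>\<Sum>y\<in>{m..<n}. z^y\<bar> \<le> (\<bar>z\<bar>^m - \<bar>z\<bar>^n)/(1-\<bar>z\<bar>)"
proof -
  have "\<bar>\<Sum>y\<in>{m..<n}. z^y\<bar> \<le> (\<Sum>y\<in>{m..<n}. \<bar>z\<bar>^y)"
    by (rule order_trans[OF sum_abs]) (simp add: power_abs)
  also have "\<dots> = (\<bar>z\<bar>^m - \<bar>z\<bar>^n)/(1-\<bar>z\<bar>)" using assms by (intro gp_closed) auto
  finally show ?thesis .
qed

lemma s1:
  fixes d G1 G2 G3 G4 :: real
  assumes d: "d \<noteq> 0"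
  shows "(1 - (G1/d + G2/d) - G3/d - G3/d*(G1/d + G2/d)*(G4/d) - G4/d*(1+G4/d)*(G1/d + (G1/d + G2/d)*(G2/d))) * d^4
    = d^4 - d^3*(G1+G2) - d^3*G3 - d*G3*(G1+G2)*G4 - G4*(d+G4)*(G1*d + (G1+G2)*G2)"
  using d by (simp add: field_simps power2_eq_square power3_eq_cube power4_eq_xxxx)

lemma s2:
  fixes d t P Q R ps x :: real
  assumes ps: "ps*d = P - Q" and x: "x = 1 - d"
  shows "d^4 - d^3*(t*(x-P)+t*(P-Q)) - d^3*(t*(Q-R)) - d*(t*(Q-R))*(t*(x-P)+t*(P-Q))*(t*R)
      - (t*R)*(d+t*R)*(t*(x-P)*d + (t*(x-P)+t*(P-Q))*(t*(P-Q)))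
    = ((1-x-t*x)*((1-x)^2 + t*R*(1-x) + t^2*(P*R) + t^3*(R*R)*ps) + t^3*Q*R*(P + t*R*ps)) * d"
  using ps x by algebra

lemma s1n:
  fixes d G2 G3 G4 :: real
  assumes d: "d \<noteq> 0"
  shows "((G3/d + G4/d)*(G4/d)*((1+G4/d)*(G2/d) + G3/d + G4/d)) * d^4
    = (G3 + G4)*G4*((d + G4)*G2 + d*(G3 + G4))"
  using d by (simp add: field_simps power2_eq_square power3_eq_cube power4_eq_xxxx)

lemma s3:
  fixes d t P Q R ps x :: real
  assumes ps: "ps*d = P - Q" and x: "x = 1 - d"
  shows "(t*(Q-R) + t*R)*(t*R)*((d + t*R)*(t*(P-Q)) + d*(t*(Q-R) + t*R))
    = (t^3*Q*R*(P + t*R*ps)) * d"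
  using ps x by algebra

lemma cancel_d:
  fixes X Y d :: real
  assumes "X*d^4 = Y*d" "d \<noteq> 0"
  shows "X*d^3 = Y"
proof -
  have "(X*d^3)*d = X*d^4" by algebra
  then have "(X*d^3)*d = Y*d" using assms(1) by simp
  then show ?thesis using assms(2) by simp
qed

lemma solve_A:
  fixes D A N d Dt Nt :: real
  assumes "D*A = N" "0 < D" "d \<noteq> 0" "D*d^3 = Dt" "N*d^3 = Nt"
  shows "A = Nt/Dt"
proof -
  have "A = N/D" using assms(1,2) by (simp add: field_simps)
  also have "\<dots> = (N*d^3)/(D*d^3)" using assms(3) by simp
  finally show ?thesis using assms(4,5) by simp
qed

lemma tele: fixes T X1 Xa Xb Xc D :: real
  shows "T*((X1-Xa)/D) + T*((Xa-Xb)/D) + T*((Xb-Xc)/D) + T*(Xc/D) = T*X1/D"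
  by (simp add: divide_inverse algebra_simps)

theorem theorem5:
  fixes a b c :: nat and t x :: real
  assumes "0 < a" "a < b" "b \<le> c"
    and "\<bar>x\<bar> * (1 + \<bar>t\<bar>) < 1"
  shows "(wt t x has_sum
     (t^3 * x^(a+b+c) * (1 + t * x^c * (\<Sum>i<b-a. x^i))) /
     ((1 - x - t*x) *
        ((1-x)^2 + t * x^c * (1-x) + t^2 * x^(a+c) + t^3 * x^(a+2*c) * (\<Sum>i<b-a. x^i))
      + t^3 * x^(a+b+c) * (1 + t * x^c * (\<Sum>i<b-a. x^i))))
     (Sset [b, a, c])"
proof -
  note conv = assms(4)
  have abc: "1 \<le> a" "a < b" "b \<le> c" using assms by auto
  have "0 \<le> \<bar>t\<bar> * \<bar>x\<bar>" by simp
  moreover have h: "\<bar>x\<bar> + \<bar>t\<bar>*\<bar>x\<bar> < 1" using conv by (simp add: algebra_simps)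
  ultimately have x1: "\<bar>x\<bar> < 1" by linarith
  define d where "d = 1 - x"
  have d0: "d \<noteq> 0" using x1 by (auto simp: d_def)
  have dpos: "1 - \<bar>x\<bar> > 0" using x1 by simp
  define F where "F = (\<lambda>s. infsum (wt t x) (LS a b c s))"
  define A where "A = F (False,False)"
  define B where "B = F (True,False)"
  define C where "C = F (False,True)"
  define E where "E = F (True,True)"
  define g1 where "g1 = t * (\<Sum>y\<in>{1..<a}. x^y)"
  define g2 where "g2 = t * (\<Sum>y\<in>{a..<b}. x^y)"
  define g3 where "g3 = t * (\<Sum>y\<in>{b..<c}. x^y)"
  define g4 where "g4 = t * x^c/(1-x)"
  have eFF: "A = A*g1 + A*g2 + B*g3 + B*g4"
    using state_eq[OF conv abc, of False False] unfolding F_def A_def B_def g1_def g2_def g3_def g4_def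
    by simp
  have eTF: "B = A*g1 + C*g2 + E*g3 + E*g4"
    using state_eq[OF conv abc, of True False] unfolding F_def A_def B_def C_def E_def g1_def g2_def g3_def g4_def
    by simp
  have eFT: "C = A*g1 + A*g2 + B*g3 + g4"
    using state_eq[OF conv abc, of False True] unfolding F_def A_def B_def C_def g1_def g2_def g3_def g4_def
    by simp
  have eTT: "E = A*g1 + C*g2 + E*g3 + g4"
    using state_eq[OF conv abc, of True True] unfolding F_def A_def B_def C_def E_def g1_def g2_def g3_def g4_def
    by simp
  have DA: "(1 - (g1+g2) - g3 - g3*(g1+g2)*g4 - g4*(1+g4)*(g1 + (g1+g2)*g2)) * A
           = (g3+g4)*g4*((1+g4)*g2 + g3 + g4)"
    by (rule alg[OF eFF eTF eFT eTT])
  have b1: "\<bar>g1\<bar> \<le> \<bar>t\<bar> * ((\<bar>x\<bar>^1 - \<bar>x\<bar>^a)/(1-\<bar>x\<bar>))"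
    unfolding g1_def abs_mult by (rule mult_left_mono[OF abs_gp]) (use abc x1 in auto)
  have b2: "\<bar>g2\<bar> \<le> \<bar>t\<bar> * ((\<bar>x\<bar>^a - \<bar>x\<bar>^b)/(1-\<bar>x\<bar>))"
    unfolding g2_def abs_mult by (rule mult_left_mono[OF abs_gp]) (use abc x1 in auto)
  have b3: "\<bar>g3\<bar> \<le> \<bar>t\<bar> * ((\<bar>x\<bar>^b - \<bar>x\<bar>^c)/(1-\<bar>x\<bar>))"
    unfolding g3_def abs_mult by (rule mult_left_mono[OF abs_gp]) (use abc x1 in auto)
  have b4: "\<bar>g4\<bar> \<le> \<bar>t\<bar> * (\<bar>x\<bar>^c/(1-\<bar>x\<bar>))"
  proof -
    have "1 - \<bar>x\<bar> \<le> \<bar>1 - x\<bar>" by linarith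
    then have "\<bar>x\<bar>^c/\<bar>1-x\<bar> \<le> \<bar>x\<bar>^c/(1-\<bar>x\<bar>)"
      by (intro divide_left_mono) (use dpos in auto)
    then have "\<bar>t\<bar> * (\<bar>x\<bar>^c/\<bar>1-x\<bar>) \<le> \<bar>t\<bar> * (\<bar>x\<bar>^c/(1-\<bar>x\<bar>))"
      by (rule mult_left_mono) simp
    then show ?thesis unfolding g4_def by (simp add: abs_mult power_abs)
  qed
  have "\<bar>t\<bar> * ((\<bar>x\<bar>^1 - \<bar>x\<bar>^a)/(1-\<bar>x\<bar>)) + \<bar>t\<bar> * ((\<bar>x\<bar>^a - \<bar>x\<bar>^b)/(1-\<bar>x\<bar>))
      + \<bar>t\<bar> * ((\<bar>x\<bar>^b - \<bar>x\<bar>^c)/(1-\<bar>x\<bar>)) + \<bar>t\<bar> * (\<bar>x\<bar>^c/(1-\<bar>x\<bar>)) = \<bar>t\<bar>*\<bar>x\<bar>^1/(1-\<bar>x\<bar>)"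
    by (rule tele)
  also have "\<dots> < 1" using dpos h by (simp add: divide_less_eq)
  finally have gs: "\<bar>g1\<bar> + \<bar>g2\<bar> + \<bar>g3\<bar> + \<bar>g4\<bar> < 1" using b1 b2 b3 b4 by linarith
  have Dpos: "0 < 1 - (g1+g2) - g3 - g3*(g1+g2)*g4 - g4*(1+g4)*(g1 + (g1+g2)*g2)"
    by (rule delta_pos[OF gs])
  define P where "P = x^a"
  define Q where "Q = x^b"
  define R where "R = x^c"
  define \<sigma> where "\<sigma> = (\<Sum>i<b-a. x^i)"
  define ps where "ps = P*\<sigma>"
  have x1': "x \<noteq> 1" using x1 by auto
  have G1: "g1 = (t*(x-P))/d" unfolding g1_def P_def d_def using gp_closed[of 1 a x] abc x1' by simp
  have G2: "g2 = (t*(P-Q))/d" unfolding g2_def P_def Q_def d_def using gp_closed[of a b x] abc x1' by simp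
  have G3: "g3 = (t*(Q-R))/d" unfolding g3_def Q_def R_def d_def using gp_closed[of b c x] abc x1' by simp
  have G4: "g4 = (t*R)/d" unfolding g4_def R_def d_def by simp
  have psd: "ps*d = P - Q"
  proof -
    have e1: "d*\<sigma> = 1 - x^(b-a)" unfolding d_def \<sigma>_def using gp_mult[of 0 "b-a" x]
      by (simp add: atLeast0LessThan)
    have e2: "P * x^(b-a) = Q" unfolding P_def Q_def using abc by (simp add: power_add[symmetric])
    have "P*\<sigma>*d = P*(d*\<sigma>)" by (simp add: mult_ac)
    also have "\<dots> = P - P*x^(b-a)" unfolding e1 by (simp add: right_diff_distrib)
    also have "\<dots> = P - Q" using e2 by simp
    finally show ?thesis unfolding ps_def .
  qed
  have xd: "x = 1 - d" by (simp add: d_def)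
  define Dt where "Dt = (1-x-t*x)*((1-x)^2 + t*R*(1-x) + t^2*(P*R) + t^3*(R*R)*ps) + t^3*Q*R*(P + t*R*ps)"
  define Nt where "Nt = t^3*Q*R*(P + t*R*ps)"
  have Dd: "(1 - (g1+g2) - g3 - g3*(g1+g2)*g4 - g4*(1+g4)*(g1 + (g1+g2)*g2)) * d^3 = Dt"
  proof (rule cancel_d[OF _ d0])
    show "(1 - (g1+g2) - g3 - g3*(g1+g2)*g4 - g4*(1+g4)*(g1 + (g1+g2)*g2)) * d^4 = Dt * d"
      unfolding G1 G2 G3 G4 Dt_def
      by (rule trans[OF s1[OF d0, of "t*(x-P)" "t*(P-Q)" "t*(Q-R)" "t*R"] s2[OF psd xd, of t R]])
  qed
  have Nd: "((g3+g4)*g4*((1+g4)*g2 + g3 + g4)) * d^3 = Nt"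
  proof (rule cancel_d[OF _ d0])
    show "((g3+g4)*g4*((1+g4)*g2 + g3 + g4)) * d^4 = Nt * d"
      unfolding G2 G3 G4 Nt_def
      by (rule trans[OF s1n[OF d0, of "t*(Q-R)" "t*R" "t*(P-Q)"] s3[OF psd xd, of t R]])
  qed
  have Aval: "A = Nt / Dt" by (rule solve_A[OF DA Dpos d0 Dd Nd])
  have pw1: "x^(a+b+c) = P*Q*R" unfolding P_def Q_def R_def by (simp add: power_add)
  have pw2: "x^(a+c) = P*R" unfolding P_def R_def by (simp add: power_add)
  have pw3: "x^(a+2*c) = P*(R*R)" unfolding P_def R_def by (simp add: power_add mult_2)
  have sg: "(\<Sum>i<b-a. x^i) = \<sigma>" by (simp add: \<sigma>_def)
  have Nt_eq: "t^3 * x^(a+b+c) * (1 + t * x^c * (\<Sum>i<b-a. x^i)) = Nt"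
    unfolding Nt_def ps_def pw1 sg R_def[symmetric] by algebra
  have Dt_eq: "(1 - x - t*x) *
        ((1-x)^2 + t * x^c * (1-x) + t^2 * x^(a+c) + t^3 * x^(a+2*c) * (\<Sum>i<b-a. x^i))
      + t^3 * x^(a+b+c) * (1 + t * x^c * (\<Sum>i<b-a. x^i)) = Dt"
    unfolding Dt_def ps_def pw1 pw2 pw3 sg R_def[symmetric] by algebra
  have SL: "Sset [b,a,c] = LS a b c (False,False)" by (simp add: Sset_go LS_def)
  have "wt t x summable_on LS a b c (False,False)"
    by (rule summable_on_subset_banach[OF wt_summable_pwords[OF conv]]) (auto simp: LS_def)
  then have "(wt t x has_sum A) (Sset [b,a,c])"
    unfolding SL A_def F_def by (simp add: summable_iff_has_sum_infsum[symmetric])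
  moreover have Dt_eq': "(1 - x - t*x) *
        ((1-x)^2 + t * x^c * (1-x) + t^2 * x^(a+c) + t^3 * x^(a+2*c) * (\<Sum>i<b-a. x^i))
      + Nt = Dt" using Dt_eq unfolding Nt_eq .
  ultimately show ?thesis unfolding Nt_eq Dt_eq' Aval by simp
qed

end
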